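(* Let $\alpha=a_1\cdots a_n\neq (k-1)^n$ be a bracelet over $\{0,\dots,k-1\}$ and let $j$ be the index of the last symbol of $\alpha$ different from $k-1$. Then $\mathrm{LastNonMax}(\alpha)=a_1\cdots a_{j-1}(a_j+1)(k-1)^{n-j}$ is a bracelet.
   Context: Let $\Sigma=\{0,1,\dots,k-1\}$, $k\ge 2$. Strings are compared lexicographically ($\alpha<\beta$ if $\alpha$ is a proper prefix of $\beta$, or $\alpha$ has the smaller symbol at the first index where they differ). For $\alpha=a_1\cdots a_n$, $\alpha^R=a_n\cdots a_1$; $[\alpha]$ is the set of rotations of $\alpha$. $\alpha$ is a bracelet if it is the lexicographically smallest element of $[\alpha]\cup[\alpha^R]$. *)

theory Defs
  imports Main
begin

definition lex_less :: "nat list \<Rightarrow> nat list \<Rightarrow> bool" where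
  "lex_less a b \<longleftrightarrow>
     (length a < length b \<and> take (length a) b = a) \<or>
     (\<exists>i < min (length a) (length b). take i a = take i b \<and> a ! i < b ! i)"

definition rotations :: "nat list \<Rightarrow> nat list set" where
  "rotations a = {rotate i a | i. i < length a} \<union> {a}"

definition is_bracelet :: "nat list \<Rightarrow> bool" where
  "is_bracelet a \<longleftrightarrow>
     (\<forall>b \<in> rotations a \<union> rotations (rev a). \<not> lex_less b a)"

text \<open>j is the (1-based) index of the last symbol different from k-1;
  LastNonMax increments it and fills the remainder with k-1.\<close>

definition last_non_max :: "nat \<Rightarrow> nat list \<Rightarrow> nat list" where
  "last_non_max k a =
     (let j = Max {i. 1 \<le> i \<and> i \<le> length a \<and> a ! (i - 1) \<noteq> k - 1} in
      take (j - 1) a @ [a ! (j - 1) + 1] @ replicate (length a - j) (k - 1))"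

end

theory Submission
  imports Defs "HOL-Library.Multiset"
begin

lemma modlem:
  fixes n r j p :: nat
  assumes "j < n" "p < n"
  shows "((r + p) mod n = j) = (p = (j + n - r mod n) mod n)"
proof -
  define r' where "r' = r mod n"
  have r'n: "r' < n" using assms unfolding r'_def by simp
  have e0: "(r + p) mod n = (r' + p) mod n" unfolding r'_def by (simp add: mod_add_left_eq)
  have e1: "j + n - r' = j + (n - r')" using r'n by simp
  show ?thesis
  proof
    assume h: "(r + p) mod n = j"
    have "(j + (n - r')) mod n = ((r' + p) mod n + (n - r')) mod n" using h e0 by simp
    also have "\<dots> = (r' + p + (n - r')) mod n" by (simp add: mod_add_left_eq)
    also have "r' + p + (n - r') = p + n" using r'n by simp
    also have "(p + n) mod n = p" using assms by simp
    finally show "p = (j + n - r mod n) mod n" using e1 unfolding r'_def by simp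
  next
    assume h: "p = (j + n - r mod n) mod n"
    have "(r' + p) mod n = (r' + (j + (n - r')) mod n) mod n" using h e1 unfolding r'_def by simp
    also have "\<dots> = (r' + (j + (n - r'))) mod n" by (simp add: mod_add_right_eq)
    also have "r' + (j + (n - r')) = j + n" using r'n by simp
    also have "(j + n) mod n = j" using assms by simp
    finally show "(r + p) mod n = j" using e0 by simp
  qed
qed

lemma rot_upd:
  assumes "j < length xs"
  shows "\<exists>ip<length xs. \<forall>v. rotate r (xs[j:=v]) = (rotate r xs)[ip:=v]"
proof -
  let ?n = "length xs"
  let ?ip = "(j + ?n - r mod ?n) mod ?n"
  have n0: "?n > 0" using assms by (cases xs) auto
  have "\<forall>v. rotate r (xs[j:=v]) = (rotate r xs)[?ip:=v]"
  proof
    fix v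
    show "rotate r (xs[j:=v]) = (rotate r xs)[?ip:=v]"
    proof (rule nth_equalityI)
      show "length (rotate r (xs[j := v])) = length ((rotate r xs)[?ip := v])" by simp
      fix p assume "p < length (rotate r (xs[j := v]))"
      then have p: "p < ?n" by simp
      have m: "(r + p) mod ?n < ?n" using n0 by simp
      have e1: "(rotate r xs)[?ip := v] ! p = (if p = ?ip then v else xs ! ((r+p) mod ?n))"
        using p by (simp add: nth_list_update nth_rotate)
      have e2: "rotate r (xs[j:=v]) ! p = (xs[j:=v]) ! ((r+p) mod ?n)"
        using p by (simp add: nth_rotate)
      also have "\<dots> = (if (r+p) mod ?n = j then v else xs ! ((r+p) mod ?n))"
        using m by (simp add: nth_list_update)
      finally show "rotate r (xs[j := v]) ! p = (rotate r xs)[?ip := v] ! p"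
        using e1 modlem[OF assms p, of r] by simp
    qed
  qed
  moreover have "?ip < ?n" using n0 by simp
  ultimately show ?thesis by blast
qed

lemma mset_rotate: "mset (rotate r xs) = mset xs"
  by (metis append_take_drop_id mset_append rotate_drop_take union_commute)

lemma rot_in: "rotate r xs \<in> rotations xs"
proof (cases "xs = []")
  case True
  then have "rotate r xs \<in> {xs}" by simp
  then show ?thesis unfolding rotations_def by (rule UnI2)
next
  case False
  then have "r mod length xs < length xs" by simp
  then have h: "rotate r xs = rotate (r mod length xs) xs \<and> r mod length xs < length xs"
    by (rule conjI[OF rotate_conv_mod])
  have "rotate r xs \<in> {rotate i xs | i. i < length xs}"
    by (rule CollectI, rule exI[of _ "r mod length xs"], rule h)
  then show ?thesis unfolding rotations_def by (rule UnI1)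
qed

lemma rot_ex: "c \<in> rotations X \<Longrightarrow> \<exists>r. c = rotate r X"
  unfolding rotations_def
  apply (elim UnE)
   apply blast
  by (rule exI[of _ 0]) simp

lemma take_eq_nth:
  assumes "length X = n" "length a = n" "i \<le> n"
  shows "(take i X = take i a) = (\<forall>p<i. X!p = a!p)"
  using assms by (auto simp: list_eq_iff_nth_eq)

lemma notless_iff:
  assumes "length X = length a"
  shows "(\<not> lex_less X a) = (\<forall>i<length a. (\<forall>p<i. X!p = a!p) \<longrightarrow> a!i \<le> X!i)"
  using assms take_eq_nth[of X "length a" a] unfolding lex_less_def
  apply (auto simp: not_less)
  by (meson less_imp_le_nat leD)

lemma extend_eq:
  fixes X a :: "nat list" and m n j :: nat
  assumes H: "\<forall>i<n. (\<forall>p<i. X!p = a!p) \<longrightarrow> a!i \<le> X!i"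
    and Xmax: "\<forall>p<n. X!p \<le> m" and tail: "\<forall>p. j < p \<and> p < n \<longrightarrow> a!p = m"
    and pre: "\<forall>p\<le>j. X!p = a!p"
    and qq: "q \<le> n"
  shows "\<forall>p<q. X!p = a!p"
  using qq
proof (induction q)
  case 0 then show ?case by simp
next
  case (Suc q)
  then have qn: "q < n" by simp
  have IH: "\<forall>p<q. X!p = a!p" using Suc by simp
  have Xq: "X!q = a!q"
  proof (cases "q \<le> j")
    case True then show ?thesis using pre by simp
  next
    case False
    have "(\<forall>p<q. X!p = a!p) \<longrightarrow> a!q \<le> X!q" using H qn by simp
    then have "a!q \<le> X!q" using IH by simp
    moreover have "a!q = m" using tail False qn by simp
    moreover have "X!q \<le> m" using Xmax qn by simp
    ultimately show ?thesis by simp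
  qed
  show ?case
  proof (intro allI impI)
    fix p assume "p < Suc q"
    then have "p < q \<or> p = q" by auto
    then show "X!p = a!p" using IH Xq by auto
  qed
qed

lemma generic:
  fixes a X Y B :: "nat list" and m :: nat
  assumes n: "length a = n" "length X = n" and jn: "j < n" and ipn: "ip < n"
    and amax: "\<forall>p<n. a!p \<le> m" and aj: "a!j < m"
    and tail: "\<forall>p. j < p \<and> p < n \<longrightarrow> a!p = m"
    and msX: "mset X = mset a"
    and Y: "Y = X[ip := X!ip + 1]" and B: "B = a[j := a!j + 1]"
    and msY: "mset Y = mset B"
    and H: "\<forall>i<n. (\<forall>p<i. X!p = a!p) \<longrightarrow> a!i \<le> X!i"
  shows "\<forall>i<n. (\<forall>p<i. Y!p = B!p) \<longrightarrow> B!i \<le> Y!i"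
proof (intro allI impI)
  fix i assume i: "i < n" and pre: "\<forall>p<i. Y!p = B!p"
  have lenY: "length Y = n" "length B = n" using Y B n by simp_all
  have Bmax: "\<forall>p<n. B!p \<le> m"
  proof (intro allI impI)
    fix p assume "p < n"
    then show "B!p \<le> m" using amax aj B n by (cases "p = j") auto
  qed
  have "set_mset (mset Y) = set_mset (mset B)" using msY by (rule arg_cong)
  then have setYB: "set Y = set B" by simp
  have "set_mset (mset X) = set_mset (mset a)" using msX by (rule arg_cong)
  then have setXa: "set X = set a" by simp
  have Xmax: "\<forall>p<n. X!p \<le> m"
  proof (intro allI impI)
    fix p assume "p < n"
    then have "X!p \<in> set X" using n by simp
    then have "X!p \<in> set a" using setXa by simp
    then obtain q where q: "q < length a" "a!q = X!p" unfolding in_set_conv_nth by blast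
    have qn: "q < n" using q(1) n(1) by simp
    have "a!q \<le> m" using amax qn by simp
    then show "X!p \<le> m" using q by simp
  qed
  have Yp: "\<And>p. p < n \<Longrightarrow> p \<noteq> ip \<Longrightarrow> Y!p = X!p" using Y by simp
  have Yip: "Y!ip = X!ip + 1" using Y ipn n by simp
  have Bp: "\<And>p. p < n \<Longrightarrow> p \<noteq> j \<Longrightarrow> B!p = a!p" using B by simp
  have Bj: "B!j = a!j + 1" using B jn n by simp
  show "B!i \<le> Y!i"
  proof (cases "j < i")
    case True
    have Bi: "B!i = m" using Bp[of i] tail True i by simp
    have tk: "take i Y = take i B" using pre take_eq_nth[OF lenY, of i] i by simp
    have "mset (take i Y) + mset (drop i Y) = mset (take i B) + mset (drop i B)"
      unfolding mset_append[symmetric] append_take_drop_id by (rule msY)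
    then have "mset (drop i Y) = mset (drop i B)" using tk by simp
    then have "set_mset (mset (drop i Y)) = set_mset (mset (drop i B))" by (rule arg_cong)
    then have sd: "set (drop i Y) = set (drop i B)" by simp
    have "Y!i \<in> set (drop i Y)" using nth_mem[of 0 "drop i Y"] i lenY by simp
    then have "Y!i \<in> set (drop i B)" using sd by simp
    then obtain q where q: "q < length (drop i B)" "drop i B ! q = Y!i"
      unfolding in_set_conv_nth by blast
    then have "B!(i+q) = Y!i" "i + q < n" using lenY by auto
    then have "Y!i = m" using Bp[of "i+q"] tail True by simp
    then show ?thesis using Bi by simp
  next
    case False
    then have ij: "i \<le> j" by simp
    show ?thesis
    proof (cases "ip < i")
      case True
      have "\<forall>p<ip. X!p = a!p"
      proof (intro allI impI)
        fix p assume pp: "p < ip"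
        then have h: "p < i" "p \<noteq> ip" "p \<noteq> j" "p < n" using True ij i by auto
        show "X!p = a!p" using pre[rule_format, OF h(1)] Yp[OF h(4) h(2)] Bp[OF h(4) h(3)] by simp
      qed
      then have "a!ip \<le> X!ip" using H ipn by blast
      moreover have "Y!ip = B!ip" using pre True by simp
      ultimately show ?thesis using Yip Bp[of ip] True ij ipn by simp
    next
      case False
      then have ipi: "i \<le> ip" by simp
      have eqp: "\<forall>p<i. X!p = a!p"
      proof (intro allI impI)
        fix p assume pp: "p < i"
        then have h: "p < i" "p \<noteq> ip" "p \<noteq> j" "p < n" using ipi ij i by auto
        show "X!p = a!p" using pre[rule_format, OF h(1)] Yp[OF h(4) h(2)] Bp[OF h(4) h(3)] by simp
      qed
      then have Hi: "a!i \<le> X!i" using H i by blast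
      show ?thesis
      proof (cases "i < j")
        case True
        then show ?thesis using Hi Bp[of i] Yp[of i] Yip i by (cases "i = ip") auto
      next
        case False
        then have ieq: "i = j" using ij by simp
        show ?thesis
        proof (cases "ip = j")
          case True
          then show ?thesis using Hi ieq Yip Bj by simp
        next
          case False
          then have ipj: "j < ip" using ipi ieq by simp
          have "X!j \<noteq> a!j"
          proof
            assume Xj: "X!j = a!j"
            have pj: "\<forall>p\<le>j. X!p = a!p"
            proof (intro allI impI)
              fix p assume "p \<le> j"
              then have "p < j \<or> p = j" by auto
              then show "X!p = a!p" using eqp ieq Xj by auto
            qed
            have allp: "\<forall>p<n. X!p = a!p" using extend_eq[OF H Xmax tail pj order_refl] .
            have "X!ip = a!ip" using allp ipn by simp
            then have Ym: "Y!ip = m + 1" using Yip tail[rule_format, of ip] ipj ipn by simp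
            have "Y!ip \<in> set Y" using ipn lenY by simp
            then have "Y!ip \<in> set B" using setYB by simp
            then obtain q where q: "q < length B" "B!q = Y!ip" unfolding in_set_conv_nth by blast
            have qn: "q < n" using q(1) lenY(2) by simp
            have "B!q \<le> m" using Bmax qn by simp
            then show False using q Ym by simp
          qed
          then show ?thesis using Hi ieq Yp[of i] ipj i Bj by simp
        qed
      qed
    qed
  qed
qed

theorem mainTheorem4:
  fixes k :: nat and a :: "nat list"
  assumes "k \<ge> 2"
    and "set a \<subseteq> {0..<k}"
    and "a \<noteq> replicate (length a) (k - 1)"
    and "is_bracelet a"
  shows "is_bracelet (last_non_max k a)"
proof -
  define n where "n = length a"
  define m where "m = k - 1"
  define S where "S = {i. 1 \<le> i \<and> i \<le> length a \<and> a ! (i - 1) \<noteq> k - 1}"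
  define J where "J = Max S"
  have finS: "finite S" unfolding S_def by simp
  have "\<exists>p<n. a!p \<noteq> m"
  proof (rule ccontr)
    assume "\<not> (\<exists>p<n. a!p \<noteq> m)"
    then have "\<forall>p<n. a!p = m" by auto
    then have "a = replicate (length a) (k - 1)" unfolding n_def m_def
      by (simp add: list_eq_iff_nth_eq)
    then show False using assms(3) by simp
  qed
  then obtain p0 where p0: "p0 < n" "a!p0 \<noteq> m" by blast
  have "Suc p0 \<in> S" using p0 unfolding S_def n_def m_def by simp
  then have Sne: "S \<noteq> {}" by blast
  have JS: "J \<in> S" unfolding J_def by (rule Max_in[OF finS Sne])
  have Jge: "\<forall>i\<in>S. i \<le> J" unfolding J_def using Max_ge[OF finS] by blast
  define j where "j = J - 1"
  have jn: "j < n" and ajm: "a!j \<noteq> m" using JS unfolding S_def j_def n_def m_def by auto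
  have amax: "\<forall>p<n. a!p \<le> m"
  proof (intro allI impI)
    fix p assume "p < n"
    then have "a!p \<in> set a" unfolding n_def by simp
    then have "a!p < k" using assms(2) by auto
    then show "a!p \<le> m" unfolding m_def by simp
  qed
  then have aj: "a!j < m" using ajm jn by (simp add: order.not_eq_order_implies_strict)
  have tail: "\<forall>p. j < p \<and> p < n \<longrightarrow> a!p = m"
  proof (intro allI impI)
    fix p assume h: "j < p \<and> p < n"
    show "a!p = m"
    proof (rule ccontr)
      assume "a!p \<noteq> m"
      then have "Suc p \<in> S" using h unfolding S_def n_def m_def by simp
      then have "Suc p \<le> J" using Jge by blast
      moreover have "1 \<le> J" using JS unfolding S_def by simp
      ultimately show False using h unfolding j_def by linarith
    qed
  qed
  define B where "B = a[j := a!j + 1]"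
  have J1: "1 \<le> J" using JS unfolding S_def by simp
  then have Jj: "J = Suc j" unfolding j_def by simp
  have dr: "drop (Suc j) a = replicate (n - Suc j) m"
  proof (rule replicate_eqI)
    show "length (drop (Suc j) a) = n - Suc j" unfolding n_def by simp
    fix y assume "y \<in> set (drop (Suc j) a)"
    then obtain q where "q < length (drop (Suc j) a)" "drop (Suc j) a ! q = y"
      unfolding in_set_conv_nth by blast
    then show "y = m" using tail unfolding n_def by auto
  qed
  have LB: "last_non_max k a = B"
  proof -
    have "B = take j a @ (a!j + 1) # drop (Suc j) a"
      unfolding B_def using jn unfolding n_def by (simp add: upd_conv_take_nth_drop)
    moreover have "last_non_max k a = take (J - 1) a @ [a ! (J - 1) + 1] @ replicate (length a - J) (k - 1)"
      unfolding last_non_max_def Let_def J_def S_def by (rule refl)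
    moreover have "J - 1 = j" "length a - J = n - Suc j" "k - 1 = m"
      using Jj unfolding n_def m_def by simp_all
    ultimately show ?thesis using dr by simp
  qed
  have lenB: "length B = n" unfolding B_def n_def by simp
  have msB: "mset B = mset B" ..
  have key: "\<not> lex_less Y B" if Xrot: "X \<in> rotations a \<union> rotations (rev a)"
     and ip: "ip < n" and XY: "\<forall>v. rotate r (f (a[j:=v])) = X0[ip := v]"
     and X0: "X0 = rotate r (f a)" and XX: "X = X0" and Yd: "Y = rotate r (f B)"
     and mf: "\<And>xs. mset (f xs) = mset xs"
     for X X0 Y ip r and f :: "nat list \<Rightarrow> nat list"
  proof -
    have "length (f a) = length a" using arg_cong[OF mf[of a], of size] by simp
    then have lenX: "length X = n" using XX X0 unfolding n_def by simp
    have msX: "mset X = mset a" unfolding XX X0 mset_rotate mf by simp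
    have "X0[ip := a!j] = rotate r (f (a[j:=a!j]))" using XY[rule_format, of "a!j"] by simp
    also have "\<dots> = X0" using X0 by simp
    finally have u: "X0[ip := a!j] = X0" .
    have "X!ip = X0[ip := a!j] ! ip" using u XX by simp
    also have "\<dots> = a!j" using ip lenX XX by simp
    finally have Xip: "X!ip = a!j" .
    have Y': "Y = X[ip := X!ip + 1]" using XY Yd XX Xip unfolding B_def by simp
    have msY: "mset Y = mset B" unfolding Yd mset_rotate mf by simp
    have H0: "\<not> lex_less X a" using assms(4) Xrot unfolding is_bracelet_def by blast
    have H: "\<forall>i<n. (\<forall>p<i. X!p = a!p) \<longrightarrow> a!i \<le> X!i"
      using H0 notless_iff[of X a] lenX unfolding n_def by simp
    have G: "\<forall>i<n. (\<forall>p<i. Y!p = B!p) \<longrightarrow> B!i \<le> Y!i"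
      using generic[OF n_def[symmetric] lenX jn ip amax aj tail msX Y' B_def msY H] .
    have lenY: "length Y = length B" using arg_cong[OF msY, of size] by simp
    show ?thesis using G notless_iff[OF lenY] lenB by simp
  qed
  show ?thesis
    unfolding LB is_bracelet_def
  proof
    fix b assume "b \<in> rotations B \<union> rotations (rev B)"
    then obtain r where "b = rotate r B \<or> b = rotate r (rev B)"
      using rot_ex by blast
    then show "\<not> lex_less b B"
    proof
      assume b: "b = rotate r B"
      obtain ip where ip: "ip < n" "\<forall>v. rotate r (a[j:=v]) = (rotate r a)[ip:=v]"
        using rot_upd[of j a r] jn unfolding n_def by auto
      have k1: "rotate r a \<in> rotations a \<union> rotations (rev a)" using rot_in by blast
      have k2: "\<forall>v. rotate r (id (a[j:=v])) = (rotate r a)[ip:=v]" using ip(2) by simp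
      have k3: "rotate r a = rotate r (id a)" by simp
      have k4: "b = rotate r (id B)" using b by simp
      have k5: "\<And>xs. mset (id xs) = mset (xs::nat list)" by simp
      show ?thesis using key[OF k1 ip(1) k2 k3 refl k4 k5] .
    next
      assume b: "b = rotate r (rev B)"
      have rj: "n - j - 1 < length (rev a)" using jn unfolding n_def by simp
      obtain ip where ip: "ip < n" "\<forall>v. rotate r ((rev a)[n-j-1:=v]) = (rotate r (rev a))[ip:=v]"
        using rot_upd[OF rj, of r] unfolding n_def by auto
      have "\<forall>v. rotate r (rev (a[j:=v])) = (rotate r (rev a))[ip:=v]"
        using ip(2) rev_update[of j a] jn unfolding n_def by simp
      then have k2: "\<forall>v. rotate r (rev (a[j:=v])) = (rotate r (rev a))[ip:=v]" .
      have k1: "rotate r (rev a) \<in> rotations a \<union> rotations (rev a)" using rot_in by blast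
      have k5: "\<And>xs. mset (rev xs) = mset (xs::nat list)" by simp
      show ?thesis using key[OF k1 ip(1) k2 refl refl b k5] .
    qed
  qed
qed

end
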